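(* Let $m\ge2$ and $n$ be positive integers. For each complex matrix $a=(a_{\mathbf i})_{\mathbf i\in\mathcal M(m,n)}$ and each nonempty $S\subset\mathcal M(m,n)$, \[\frac{\sum_{\mathbf i\in S}|a_{\mathbf i}|}{E(S)}\le m\,\|a\|_{\ell_{\frac{m}{m-1},\infty}},\qquad\text{where } E(S):=\max_{1\le k\le m}\operatorname{card}\{i_k:\mathbf i\in S\}.\]
   Context: $\mathcal M(m,n)=\{\mathbf i=(i_1,\dots,i_m):1\le i_k\le n\}$. For $1\le p<\infty$ and a finite index set $I$, $\|x\|_{\ell_{p,\infty}(I)}=\sup_k k^{1/p}x_k^*$, where $x^*$ is the non-increasing rearrangement of $(|x_i|)_{i\in I}$. *)

theory Defs
  imports "HOL-Analysis.Analysis" "HOL-Library.Multiset"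
begin

definition multi_indices :: "nat \<Rightarrow> nat \<Rightarrow> (nat \<Rightarrow> nat) set" where
  "multi_indices m n = PiE {1..m} (\<lambda>_. {1..n})"

text \<open>Non-increasing rearrangement x*_k (k \<ge> 1) of (|x_i|)_{i in I}, I finite;
  x*_k = 0 for k > card I.\<close>
definition decr_rearr :: "('i \<Rightarrow> complex) \<Rightarrow> 'i set \<Rightarrow> nat \<Rightarrow> real" where
  "decr_rearr x I k =
     (let xs = rev (sorted_list_of_multiset (image_mset (\<lambda>i. cmod (x i)) (mset_set I)))
      in if 1 \<le> k \<and> k \<le> length xs then xs ! (k - 1) else 0)"

definition weak_lp_norm :: "real \<Rightarrow> 'i set \<Rightarrow> ('i \<Rightarrow> complex) \<Rightarrow> real" where
  "weak_lp_norm p I x = (SUP k\<in>{1::nat..}. real k powr (1 / p) * decr_rearr x I k)"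

definition E_card :: "nat \<Rightarrow> (nat \<Rightarrow> nat) set \<Rightarrow> nat" where
  "E_card m S = Max ((\<lambda>k. card ((\<lambda>i. i k) ` S)) ` {1..m})"

end

theory Submission
  imports Defs
begin

lemma sorted_desc_le:
  fixes ya yb :: "real list"
  assumes sa: "sorted_wrt (\<ge>) ya" and sb: "sorted_wrt (\<ge>) yb"
    and sub: "mset ya \<subseteq># mset yb" and k: "k < length ya"
  shows "k < length yb \<and> ya ! k \<le> yb ! k"
proof -
  have len: "length ya \<le> length yb"
    using size_mset_mono[OF sub] by simp
  hence kb: "k < length yb" using k by simp
  have "ya ! k \<le> yb ! k"
  proof (rule ccontr)
    assume "\<not> ya ! k \<le> yb ! k"
    hence lt: "yb ! k < ya ! k" by simp
    define c where "c = ya ! k"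
    have "{..k} \<subseteq> {i. i < length ya \<and> c \<le> ya ! i}"
    proof
      fix i assume "i \<in> {..k}"
      hence "i \<le> k" by simp
      thus "i \<in> {i. i < length ya \<and> c \<le> ya ! i}"
        using sa k unfolding c_def sorted_wrt_iff_nth_less
        by (cases "i = k") auto
    qed
    hence "card {..k} \<le> card {i. i < length ya \<and> c \<le> ya ! i}"
      by (intro card_mono) auto
    hence A: "Suc k \<le> length (filter (\<lambda>v. c \<le> v) ya)"
      by (simp add: length_filter_conv_card)
    have "{i. i < length yb \<and> c \<le> yb ! i} \<subseteq> {..<k}"
    proof
      fix i assume i: "i \<in> {i. i < length yb \<and> c \<le> yb ! i}"
      show "i \<in> {..<k}"
      proof (rule ccontr)
        assume "i \<notin> {..<k}"
        hence "k \<le> i" by simp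
        hence "yb ! i \<le> yb ! k" using sb i unfolding sorted_wrt_iff_nth_less
          by (cases "k = i") auto
        thus False using i lt c_def by simp
      qed
    qed
    hence "card {i. i < length yb \<and> c \<le> yb ! i} \<le> card {..<k}"
      by (intro card_mono) auto
    hence B: "length (filter (\<lambda>v. c \<le> v) yb) \<le> k"
      by (simp add: length_filter_conv_card)
    have "size (filter_mset (\<lambda>v. c \<le> v) (mset ya)) \<le> size (filter_mset (\<lambda>v. c \<le> v) (mset yb))"
      by (intro size_mset_mono multiset_filter_mono sub)
    hence "length (filter (\<lambda>v. c \<le> v) ya) \<le> length (filter (\<lambda>v. c \<le> v) yb)"
      by (metis mset_filter size_mset)
    thus False using A B by simp
  qed
  thus ?thesis using kb by simp
qed

lemma rearr_sum:
  fixes f :: "'i \<Rightarrow> real"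
  assumes fin: "finite I" and J: "J \<subseteq> I"
  defines "xs \<equiv> rev (sorted_list_of_multiset (image_mset f (mset_set I)))"
  shows "sum f J \<le> (\<Sum>k<card J. xs ! k) \<and> card J \<le> length xs"
proof -
  define ys where "ys = rev (sorted_list_of_multiset (image_mset f (mset_set J)))"
  have sx: "sorted_wrt (\<ge>) xs" unfolding xs_def sorted_wrt_rev
    using sorted_sorted_list_of_multiset by (simp add: sorted_wrt_rev)
  have sy: "sorted_wrt (\<ge>) ys" unfolding ys_def
    using sorted_sorted_list_of_multiset by (simp add: sorted_wrt_rev)
  have finJ: "finite J" using fin J finite_subset by blast
  have sub: "mset ys \<subseteq># mset xs" unfolding xs_def ys_def
    by (simp add: image_mset_subseteq_mono subset_imp_msubset_mset_set[OF J fin])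
  have ly: "length ys = card J" unfolding ys_def
    by (metis length_rev mset_sorted_list_of_multiset size_image_mset size_mset size_mset_set)
  have "sum f J = sum_list ys" unfolding ys_def
    by (metis sum_unfold_sum_mset mset_rev mset_sorted_list_of_multiset sum_mset_sum_list)
  also have "\<dots> = (\<Sum>k<card J. ys ! k)" by (simp add: sum_list_sum_nth ly lessThan_atLeast0)
  also have "\<dots> \<le> (\<Sum>k<card J. xs ! k)"
    by (intro sum_mono) (use sorted_desc_le[OF sy sx sub] ly in auto)
  finally show ?thesis using size_mset_mono[OF sub] ly by simp
qed

lemma step_ineq:
  fixes m s :: nat
  assumes m: "m \<ge> 1" and s: "s \<ge> 1"
  shows "real s powr (-((real m - 1) / real m)) \<le> real m * (real s powr (1/m) - real (s - 1) powr (1/m))"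
proof -
  define u where "u = real s powr (1/m)"
  define v where "v = real (s-1) powr (1/m)"
  have u0: "u > 0" using s by (simp add: u_def)
  have v0: "v \<ge> 0" by (simp add: v_def)
  have um: "u ^ m = real s" unfolding u_def using m s
    by (simp add: powr_realpow[symmetric] powr_powr)
  have vm: "v ^ m = real (s-1)" unfolding v_def using m s
    by (cases "s = 1") (simp_all add: powr_realpow[symmetric] powr_powr)
  have vu: "v \<le> u" unfolding u_def v_def using m by (intro powr_mono2) auto
  have "1 = u ^ m - v ^ m" using um vm s by simp
  also have "\<dots> = (u - v) * (\<Sum>i<m. v ^ (m - Suc i) * u ^ i)" by (rule power_diff_sumr2)
  also have "\<dots> \<le> (u - v) * (\<Sum>i<m. u ^ (m - 1))"
  proof (intro mult_left_mono sum_mono)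
    fix i assume i: "i \<in> {..<m}"
    have "v ^ (m - Suc i) * u ^ i \<le> u ^ (m - Suc i) * u ^ i"
      by (intro mult_right_mono power_mono) (use v0 vu u0 in auto)
    also have "\<dots> = u ^ (m - 1)" using i by (simp add: power_add[symmetric])
    finally show "v ^ (m - Suc i) * u ^ i \<le> u ^ (m - 1)" .
  qed (use vu in auto)
  finally have key: "1 \<le> (u - v) * (real m * u ^ (m - 1))" by simp
  have pu: "u ^ (m - 1) = real s powr ((real m - 1) / real m)" unfolding u_def
    using m s by (simp add: powr_realpow[symmetric] powr_powr of_nat_diff)
  have "real s powr (-((real m - 1) / real m)) = 1 / u ^ (m - 1)"
    using pu by (simp add: powr_minus divide_inverse)
  also have "\<dots> \<le> real m * (u - v)"
    using key u0 by (simp add: divide_le_eq mult_ac)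
  finally show ?thesis by (simp add: u_def v_def)
qed

lemma sum_powr_bound:
  fixes m s :: nat
  assumes m: "m \<ge> 1"
  shows "(\<Sum>k<s. real (Suc k) powr (-((real m - 1) / real m))) \<le> real m * real s powr (1/m)"
proof (induction s)
  case 0 then show ?case by simp
next
  case (Suc s)
  have "(\<Sum>k<Suc s. real (Suc k) powr (-((real m - 1) / real m)))
     = (\<Sum>k<s. real (Suc k) powr (-((real m - 1) / real m))) + real (Suc s) powr (-((real m - 1) / real m))"
    by simp
  also have "\<dots> \<le> real m * real s powr (1/m) + real m * (real (Suc s) powr (1/m) - real (Suc s - 1) powr (1/m))"
    by (intro add_mono Suc.IH step_ineq m) auto
  also have "\<dots> = real m * real (Suc s) powr (1/m)" by (simp add: algebra_simps)
  finally show ?case .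
qed

theorem lemma4p1:
  fixes m n :: nat and a :: "(nat \<Rightarrow> nat) \<Rightarrow> complex" and S :: "(nat \<Rightarrow> nat) set"
  assumes "m \<ge> 2" and "n \<ge> 1"
    and "S \<subseteq> multi_indices m n" and "S \<noteq> {}"
  shows "(\<Sum>i\<in>S. cmod (a i)) / real (E_card m S)
           \<le> real m * weak_lp_norm (real m / (real m - 1)) (multi_indices m n) a"
proof -
  note m = assms(1)
  define I where "I = multi_indices m n"
  have finI: "finite I" unfolding I_def multi_indices_def by (intro finite_PiE) auto
  have SI: "S \<subseteq> I" using assms(3) I_def by simp
  have finS: "finite S" using finI SI finite_subset by blast
  define f where "f = (\<lambda>i. cmod (a i))"
  define xs where "xs = rev (sorted_list_of_multiset (image_mset f (mset_set I)))"
  define e where "e = 1 / (real m / (real m - 1))"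
  have e: "e = (real m - 1) / real m" using m by (simp add: e_def)
  define g where "g = (\<lambda>k::nat. real k powr e * decr_rearr a I k)"
  define N where "N = weak_lp_norm (real m / (real m - 1)) I a"
  have Ng: "N = (SUP k\<in>{1::nat..}. g k)" unfolding N_def weak_lp_norm_def g_def e_def by simp
  have dr: "decr_rearr a I k = (if 1 \<le> k \<and> k \<le> length xs then xs ! (k - 1) else 0)" for k
    unfolding decr_rearr_def xs_def f_def Let_def by simp
  have bdd: "bdd_above (g ` {1::nat..})"
  proof (rule bdd_above_mono[OF bdd_above_finite])
    show "g ` {1::nat..} \<subseteq> insert 0 (g ` {1..length xs})"
      by (auto simp: g_def dr)
  qed auto
  have gN: "g k \<le> N" if "k \<ge> 1" for k
    unfolding Ng by (rule cSUP_upper[OF _ bdd]) (use that in auto)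
  have N0: "0 \<le> N" using gN[of "Suc (length xs)"] by (simp add: g_def dr)
  have xk: "xs ! k \<le> N * real (Suc k) powr (-((real m - 1) / real m))" if "k < length xs" for k
  proof -
    have "real (Suc k) powr e * xs ! k \<le> N" using gN[of "Suc k"] that by (simp add: g_def dr)
    hence "xs ! k \<le> N / real (Suc k) powr e" by (simp add: field_simps)
    thus ?thesis by (simp add: e powr_minus divide_inverse)
  qed
  obtain R where R: "sum f S \<le> (\<Sum>k<card S. xs ! k)" "card S \<le> length xs"
    using rearr_sum[OF finI SI, of f] xs_def by auto
  define E where "E = E_card m S"
  have projfin: "finite ((\<lambda>i. i k) ` S)" for k using finS by simp
  have Ege: "card ((\<lambda>i. i k) ` S) \<le> E" if "k \<in> {1..m}" for k
    unfolding E_def E_card_def by (rule Max_ge) (use that in auto)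
  have E1: "E \<ge> 1"
  proof -
    have "card ((\<lambda>i. i 1) ` S) \<ge> 1" using assms(4) finS
      by (simp add: Suc_le_eq card_gt_0_iff)
    thus ?thesis using Ege[of 1] m by auto
  qed
  have "S \<subseteq> PiE {1..m} (\<lambda>k. (\<lambda>i. i k) ` S)"
  proof
    fix i assume i: "i \<in> S"
    hence "i \<in> PiE {1..m} (\<lambda>_. {1..n})" using SI I_def multi_indices_def by auto
    thus "i \<in> PiE {1..m} (\<lambda>k. (\<lambda>i. i k) ` S)" using i by (auto simp: PiE_iff)
  qed
  hence "card S \<le> card (PiE {1..m} (\<lambda>k. (\<lambda>i. i k) ` S))"
    by (intro card_mono) (auto intro: finite_PiE projfin)
  also have "\<dots> = (\<Prod>k\<in>{1..m}. card ((\<lambda>i. i k) ` S))" by (simp add: card_PiE)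
  also have "\<dots> \<le> (\<Prod>k\<in>{1..m}. E)" by (intro prod_mono) (use Ege in auto)
  also have "\<dots> = E ^ m" by simp
  finally have cS: "card S \<le> E ^ m" .
  have sE: "real (card S) powr (1/m) \<le> real E"
  proof -
    have "real (card S) powr (1/m) \<le> real (E ^ m) powr (1/m)"
      by (intro powr_mono2) (use cS in auto)
    also have "\<dots> = real E" using m E1
      by (simp add: powr_realpow[symmetric] powr_powr)
    finally show ?thesis .
  qed
  have "sum f S \<le> (\<Sum>k<card S. N * real (Suc k) powr (-((real m - 1) / real m)))"
    using R by (smt (verit) xk lessThan_iff order.strict_trans2 sum_mono)
  also have "\<dots> = N * (\<Sum>k<card S. real (Suc k) powr (-((real m - 1) / real m)))"
    by (simp add: sum_distrib_left)
  also have "\<dots> \<le> N * (real m * real (card S) powr (1/m))"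
    by (intro mult_left_mono sum_powr_bound N0) (use m in auto)
  also have "\<dots> \<le> N * (real m * real E)"
    by (intro mult_left_mono N0 sE) (use m in auto)
  finally have "sum f S \<le> N * (real m * real E)" .
  hence "sum f S / real E \<le> real m * N" using E1 by (simp add: divide_le_eq mult_ac)
  thus ?thesis unfolding f_def E_def N_def I_def .
qed

end
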